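(* Let $A$ be an associative (not necessarily unital) algebra over a field $F$, let $n\ge 1$, $\sigma\in S_n$, and $q\in F$ with $q\neq 1$. If $A$ satisfies the identity $x_1\cdots x_n=q\,x_{\sigma(1)}\cdots x_{\sigma(n)}$, then $A$ is nilpotent, i.e. there is $m$ such that $a_1\cdots a_m=0$ for all $a_1,\dots,a_m\in A$.
   Context: $A$ satisfies the identity $x_1\cdots x_n=q\,x_{\sigma(1)}\cdots x_{\sigma(n)}$ means $a_1\cdots a_n=q\,a_{\sigma(1)}\cdots a_{\sigma(n)}$ for all $a_1,\dots,a_n\in A$. *)

theory Defs
  imports Main "HOL-Combinatorics.Permutations"
begin

definition algebra_over :: "('f::field \<Rightarrow> 'a::ring \<Rightarrow> 'a) \<Rightarrow> bool" where
  "algebra_over smult \<longleftrightarrow>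
     (\<forall>x. smult 1 x = x) \<and>
     (\<forall>c d x. smult c (smult d x) = smult (c * d) x) \<and>
     (\<forall>c d x. smult (c + d) x = smult c x + smult d x) \<and>
     (\<forall>c x y. smult c (x + y) = smult c x + smult c y) \<and>
     (\<forall>c x y. smult c (x * y) = smult c x * y) \<and>
     (\<forall>c x y. smult c (x * y) = x * smult c y)"

text \<open>Ordered product a 0 * a 1 * ... * a (n-1), meaningful for n >= 1
  (no unit available; the value for n = 0 is a dummy 0 and never used).\<close>
fun prodn :: "(nat \<Rightarrow> 'a::ring) \<Rightarrow> nat \<Rightarrow> 'a" where
  "prodn a 0 = 0"
| "prodn a (Suc 0) = a 0"
| "prodn a (Suc (Suc k)) = prodn a (Suc k) * a (Suc k)"

end

theory Submission
  imports Defs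
begin

definition Pr :: "nat \<Rightarrow> 'a::ring set" where
  "Pr k = {foldl (*) z zs | z zs. Suc (length zs) = k}"

lemma mult_foldl: "(x::'a::ring) * foldl (*) z zs = foldl (*) (x*z) zs"
  by (induction zs arbitrary: z) (simp_all add: mult.assoc)

lemma foldl_mult_right: "foldl (*) (z::'a::ring) zs * y = z * foldr (*) zs y"
  by (induction zs arbitrary: z) (simp_all add: mult.assoc)

lemma Pr_foldl: "x \<in> Pr k \<Longrightarrow> foldl (*) x W \<in> Pr (k + length W)"
proof -
  assume "x \<in> Pr k"
  then obtain z zs where z: "x = foldl (*) z zs" "Suc (length zs) = k" unfolding Pr_def by auto
  have "foldl (*) x W = foldl (*) z (zs @ W)" using z by simp
  moreover have "Suc (length (zs @ W)) = k + length W" using z by simp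
  ultimately show ?thesis unfolding Pr_def by blast
qed

lemma Pr_one: "z \<in> Pr 1"
  unfolding Pr_def by (rule CollectI, rule exI[of _ z], rule exI[of _ "[]"]) simp

lemma Pr_Suc: "z \<in> Pr (Suc (Suc k)) \<Longrightarrow> z \<in> Pr (Suc k)"
proof -
  assume "z \<in> Pr (Suc (Suc k))"
  then obtain z0 zs where z: "z = foldl (*) z0 zs" "Suc (Suc k) = Suc (length zs)" unfolding Pr_def by auto
  then obtain z1 zs' where "zs = z1 # zs'" "length zs' = k" by (cases zs) auto
  with z show ?thesis unfolding Pr_def by auto
qed

lemma Pr_mono_aux: "z \<in> Pr (j + d) \<Longrightarrow> 1 \<le> j \<Longrightarrow> z \<in> Pr j"
proof (induction d)
  case 0 then show ?case by simp
next
  case (Suc d)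
  obtain m where m: "j + d = Suc m" using Suc.prems(2) by (cases "j + d") auto
  have "z \<in> Pr (Suc (Suc m))" using Suc.prems(1) m by simp
  then have "z \<in> Pr (Suc m)" by (rule Pr_Suc)
  then have "z \<in> Pr (j + d)" using m by simp
  then show ?case using Suc.IH Suc.prems(2) by blast
qed

lemma Pr_mono: "z \<in> Pr k \<Longrightarrow> 1 \<le> j \<Longrightarrow> j \<le> k \<Longrightarrow> z \<in> Pr j"
  using Pr_mono_aux[of z j "k - j"] by simp

lemma Pr_mult: "x \<in> Pr i \<Longrightarrow> (y::'a::ring) \<in> Pr j \<Longrightarrow> x*y \<in> Pr (i+j)"
proof -
  assume "x \<in> Pr i" "y \<in> Pr j"
  then obtain y0 ys where y: "y = foldl (*) y0 ys" "Suc (length ys) = j" unfolding Pr_def by auto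
  have "x * y = foldl (*) x (y0 # ys)" using y by (simp add: mult_foldl)
  with Pr_foldl[OF \<open>x \<in> Pr i\<close>, of "y0#ys"] y show ?thesis by simp
qed

lemma Pr_split: "z \<in> Pr (i+j) \<Longrightarrow> 1 \<le> i \<Longrightarrow> 1 \<le> j \<Longrightarrow> \<exists>x y. x \<in> Pr i \<and> y \<in> Pr j \<and> (z::'a::ring) = x*y"
proof -
  assume "z \<in> Pr (i+j)" "1 \<le> i" "1 \<le> j"
  then obtain z0 zs where z: "z = foldl (*) z0 zs" "Suc (length zs) = i + j" unfolding Pr_def by auto
  define x where "x = foldl (*) z0 (take (i-1) zs)"
  define y where "y = foldl (*) (zs!(i-1)) (drop i zs)"
  have d: "drop (i-1) zs = zs!(i-1) # drop i zs"
  proof -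
    have "i - 1 < length zs" using z \<open>1 \<le> i\<close> \<open>1 \<le> j\<close> by simp
    from Cons_nth_drop_Suc[OF this] show ?thesis using \<open>1 \<le> i\<close> by simp
  qed
  have "z = foldl (*) x (drop (i-1) zs)" unfolding x_def z
    by (metis append_take_drop_id foldl_append)
  also have "\<dots> = x * y" unfolding d y_def by (simp add: mult_foldl)
  finally have "z = x*y" .
  moreover have "x \<in> Pr i"
  proof -
    have "Suc (length (take (i-1) zs)) = i" using z \<open>1 \<le> i\<close> by simp
    then show ?thesis unfolding Pr_def x_def by blast
  qed
  moreover have "y \<in> Pr j"
  proof -
    have "Suc (length (drop i zs)) = j" using z \<open>1 \<le> i\<close> \<open>1 \<le> j\<close> by simp
    then show ?thesis unfolding Pr_def y_def by blast
  qed
  ultimately show ?thesis by blast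
qed

lemma Pr_foldr_char: "(y::'a::ring) \<in> Pr (Suc w) \<Longrightarrow> \<exists>V y0. length V = w \<and> y = foldr (*) V y0"
proof (induction w arbitrary: y)
  case 0 then show ?case by (intro exI[of _ "[]"] exI[of _ y]) simp
next
  case (Suc w)
  then obtain a y' where "a \<in> Pr 1" "y' \<in> Pr (Suc w)" "y = a*y'"
    using Pr_split[of y 1 "Suc w"] by auto
  with Suc.IH obtain V y0 where "length V = w" "y' = foldr (*) V y0" by blast
  then show ?case using \<open>y = a*y'\<close> by (intro exI[of _ "a#V"] exI[of _ y0]) simp
qed

lemma foldr_Pr: "(y::'a::ring) \<in> Pr k \<Longrightarrow> foldr (*) W y \<in> Pr (k + length W)"
proof (induction W)
  case Nil then show ?case by simp
next
  case (Cons a W)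
  then have "a * foldr (*) W y \<in> Pr (1 + (k + length W))" using Pr_mult Pr_one by blast
  then show ?case by simp
qed

lemma swap_from_E:
  fixes x :: "'a::ring"
  assumes E: "\<And>x c B y :: 'a. x \<in> Pr n \<Longrightarrow> B \<in> Pr L \<Longrightarrow> y \<in> Pr n \<Longrightarrow> x*c*B*y = x*B*c*y"
    and L: "1 \<le> L" "L \<le> n"
    and x: "x \<in> Pr n" and y: "y \<in> Pr (2*n)"
  shows "x*a*b*y = x*b*a*y"
proof -
  have "y \<in> Pr (L + (2*n - L))" using y L by simp
  moreover have "1 \<le> 2*n - L" using L by simp
  ultimately have "\<exists>D y'. D \<in> Pr L \<and> y' \<in> Pr (2*n - L) \<and> y = D*y'"
    using Pr_split[of y L "2*n - L"] L(1) by blast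
  then obtain D y' where D: "D \<in> Pr L" "y' \<in> Pr (2*n - L)" "y = D*y'" by blast
  have y': "y' \<in> Pr n" using Pr_mono[OF D(2)] L by auto
  have bD: "b*D \<in> Pr L" using Pr_mono[OF Pr_mult[OF Pr_one D(1)]] L by auto
  have xb: "x*b \<in> Pr n" using Pr_mono[OF Pr_mult[OF x Pr_one]] L by auto
  have "x*a*b*y = x*a*(b*D)*y'" using D by (simp add: mult.assoc)
  also have "\<dots> = x*(b*D)*a*y'" using E[OF x bD y'] .
  also have "\<dots> = (x*b)*D*a*y'" by (simp add: mult.assoc)
  also have "\<dots> = (x*b)*a*D*y'" using E[OF xb D(1) y', of a] by (rule sym)
  also have "\<dots> = x*b*a*y" using D by (simp add: mult.assoc)
  finally show ?thesis .
qed

lemma move_from_swap: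
  fixes x :: "'a::ring"
  assumes S: "\<And>x y a b :: 'a. x \<in> Pr n \<Longrightarrow> y \<in> Pr (2*n) \<Longrightarrow> x*a*b*y = x*b*a*y"
    and n: "1 \<le> n"
  shows "x \<in> Pr n \<Longrightarrow> y \<in> Pr (2*n) \<Longrightarrow> foldl (*) x (a # zs @ W) * y = foldl (*) x (zs @ a # W) * y"
proof (induction zs arbitrary: x)
  case Nil then show ?case by simp
next
  case (Cons z zs)
  have xz: "x*z \<in> Pr n" using Pr_mono[OF Pr_mult[OF Cons.prems(1) Pr_one]] n by auto
  have yy: "foldr (*) (zs @ W) y \<in> Pr (2*n)" using Pr_mono[OF foldr_Pr[OF Cons.prems(2), of "zs @ W"], of "2*n"] n by simp
  have "foldl (*) x (a # (z # zs) @ W) * y = x*a*z*foldr (*) (zs @ W) y"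
    by (simp add: foldl_mult_right)
  also have "\<dots> = x*z*a*foldr (*) (zs @ W) y" using S[OF Cons.prems(1) yy] .
  also have "\<dots> = foldl (*) (x*z) (a # zs @ W) * y" by (simp add: foldl_mult_right)
  also have "\<dots> = foldl (*) (x*z) (zs @ a # W) * y" using Cons.IH[OF xz Cons.prems(2)] .
  finally show ?case by simp
qed

lemma sym_from_swap:
  fixes x :: "'a::ring"
  assumes S: "\<And>x y a b :: 'a. x \<in> Pr n \<Longrightarrow> y \<in> Pr (2*n) \<Longrightarrow> x*a*b*y = x*b*a*y"
    and n: "1 \<le> n"
  shows "x \<in> Pr n \<Longrightarrow> y \<in> Pr (2*n) \<Longrightarrow> mset xs = mset ys \<Longrightarrow> foldl (*) x xs * y = foldl (*) x ys * y"
proof (induction xs arbitrary: x ys)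
  case Nil then show ?case by simp
next
  case (Cons a xs)
  have "a \<in># mset ys" using Cons.prems(3)[symmetric] by simp
  then have "a \<in> set ys" by simp
  then obtain ys1 ys2 where ys: "ys = ys1 @ a # ys2" by (meson split_list)
  with Cons.prems(3) have m: "mset xs = mset (ys1 @ ys2)" by simp
  have xa: "x*a \<in> Pr n" using Pr_mono[OF Pr_mult[OF Cons.prems(1) Pr_one]] n by auto
  have "foldl (*) x (a # xs) * y = foldl (*) (x*a) (ys1 @ ys2) * y"
    using Cons.IH[OF xa Cons.prems(2) m] by simp
  also have "\<dots> = foldl (*) x (a # ys1 @ ys2) * y" by simp
  also have "\<dots> = foldl (*) x ys * y" unfolding ys
    using move_from_swap[OF S n Cons.prems(1,2)] by blast
  finally show ?case .
qed


definition lp :: "'a::ring list \<Rightarrow> 'a" where "lp xs = foldl (*) (hd xs) (tl xs)"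

lemma lp_foldl: "xs \<noteq> [] \<Longrightarrow> foldl (*) z xs = z * lp xs"
  by (cases xs) (simp_all add: lp_def mult_foldl)

lemma lp_append: "xs \<noteq> [] \<Longrightarrow> lp (xs @ ys) = foldl (*) (lp xs) ys"
  by (cases xs) (simp_all add: lp_def)

lemma lp_Pr: "length xs = k \<Longrightarrow> 1 \<le> k \<Longrightarrow> lp xs \<in> Pr k"
  unfolding lp_def Pr_def by (cases xs) auto

lemma prodn_lp_Suc: "prodn f (Suc k) = lp (map f [0..<Suc k])"
proof (induction k)
  case 0 then show ?case by (simp add: lp_def)
next
  case (Suc k)
  have "prodn f (Suc (Suc k)) = prodn f (Suc k) * f (Suc k)" by simp
  also have "\<dots> = lp (map f [0..<Suc k] @ [f (Suc k)])"
    using Suc by (subst lp_append) simp_all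
  also have "\<dots> = lp (map f [0..<Suc (Suc k)])" by simp
  finally show ?case .
qed

lemma prodn_lp: "1 \<le> k \<Longrightarrow> prodn f k = lp (map f [0..<k])"
  using prodn_lp_Suc[of f "k - 1"] by simp

lemma perm_upd:
  assumes "\<sigma> permutes {..<length xs}" "j < length xs"
  shows "permute_list \<sigma> (xs[j := v]) = (permute_list \<sigma> xs)[inv \<sigma> j := v]"
proof (rule nth_equalityI)
  show "length (permute_list \<sigma> (xs[j := v])) = length ((permute_list \<sigma> xs)[inv \<sigma> j := v])" by simp
  fix k assume k: "k < length (permute_list \<sigma> (xs[j := v]))"
  then have k': "k < length xs" by simp
  have sk: "\<sigma> k < length xs" using permutes_in_image[OF assms(1)] k' by auto
  have iff: "\<sigma> k = j \<longleftrightarrow> k = inv \<sigma> j"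
    using assms(1) by (metis permutes_inverses(1) permutes_inverses(2))
  show "permute_list \<sigma> (xs[j := v]) ! k = (permute_list \<sigma> xs)[inv \<sigma> j := v] ! k"
    using k' sk iff assms by (auto simp: permute_list_nth nth_list_update)
qed


theorem theorem4p4:
  fixes smult :: "'f::field \<Rightarrow> 'a::ring \<Rightarrow> 'a"
    and n :: nat and \<sigma> :: "nat \<Rightarrow> nat" and q :: 'f
  assumes "algebra_over smult"
    and "n \<ge> 1"
    and "\<sigma> permutes {..<n}"
    and "q \<noteq> 1"
    and "\<forall>a :: nat \<Rightarrow> 'a. prodn a n = smult q (prodn (\<lambda>i. a (\<sigma> i)) n)"
  shows "\<exists>m \<ge> 1. \<forall>a :: nat \<Rightarrow> 'a. prodn a m = 0"
proof -
  note alg = assms(1)[unfolded algebra_over_def]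
  have sm1: "\<And>x. smult 1 x = x" using alg by blast
  have smc: "\<And>c d x. smult c (smult d x) = smult (c * d) x" using alg by blast
  have sadd: "\<And>c d x. smult (c + d) x = smult c x + smult d x" using alg by blast
  have sadd2: "\<And>c x y. smult c (x + y) = smult c x + smult c y" using alg by blast
  have smL: "\<And>c x y. smult c (x * y) = smult c x * y" using alg by blast
  have smR: "\<And>c x y. smult c (x * y) = x * smult c y" using alg by blast
  have sm0: "\<And>x. smult 0 x = 0" using sadd[of 0 0] by simp
  have smz: "\<And>c. smult c 0 = 0" using sadd2[of _ 0 0] by simp
  have canc: "\<And>u v. q \<noteq> 0 \<Longrightarrow> smult q u = smult q v \<Longrightarrow> u = v"
  proof -
    fix u v assume "q \<noteq> 0" "smult q u = smult q v"
    then have "smult (inverse q) (smult q u) = smult (inverse q) (smult q v)" by simp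
    then show "u = v" using \<open>q \<noteq> 0\<close> by (simp add: smc sm1)
  qed
  have fixz: "\<And>w. w = smult q w \<Longrightarrow> w = 0"
  proof -
    fix w assume h: "w = smult q w"
    have e: "smult (1 - q) w + smult q w = w" using sadd[of "1-q" q w] sm1 by simp
    have "smult (1 - q) w + smult q w = smult q w" using e h by (rule trans)
    then have a: "smult (1 - q) w = 0" by simp
    have "w = smult (inverse (1 - q) * (1 - q)) w" using assms(4) by (simp add: sm1)
    also have "\<dots> = 0" by (simp add: smc[symmetric] a smz)
    finally show "w = 0" .
  qed
  have n1: "1 \<le> n" using assms(2) .
  have Hl: "\<And>xs. length xs = n \<Longrightarrow> lp xs = smult q (lp (permute_list \<sigma> xs))"
  proof -
    fix xs :: "'a list" assume len: "length xs = n"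
    have "prodn (\<lambda>i. xs ! i) n = smult q (prodn (\<lambda>i. xs ! (\<sigma> i)) n)" using assms(5) by blast
    moreover have "prodn (\<lambda>i. xs ! i) n = lp xs" using prodn_lp[OF n1, of "\<lambda>i. xs ! i"] len map_nth[of xs] by simp
    moreover have "prodn (\<lambda>i. xs ! (\<sigma> i)) n = lp (permute_list \<sigma> xs)"
      using prodn_lp[OF n1] len by (simp add: permute_list_def)
    ultimately show "lp xs = smult q (lp (permute_list \<sigma> xs))" by simp
  qed
  have Hpad: "\<And>(xs :: 'a list) x0 y0. length xs = n \<Longrightarrow>
      foldl (*) x0 xs * y0 = smult q (foldl (*) x0 (permute_list \<sigma> xs) * y0)"
  proof -
    fix xs :: "'a list" and x0 y0 assume len: "length xs = n"
    have l2: "length (permute_list \<sigma> xs) = n" using len by simp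
    have ne1: "xs \<noteq> []" using n1 len by auto
    have ne2: "permute_list \<sigma> xs \<noteq> []" using n1 l2 by (metis list.size(3) not_one_le_zero)
    note ne = ne1 ne2
    show "foldl (*) x0 xs * y0 = smult q (foldl (*) x0 (permute_list \<sigma> xs) * y0)"
      unfolding lp_foldl[OF ne(1)] lp_foldl[OF ne(2)] Hl[OF len]
      by (simp add: smL[symmetric] smR[symmetric])
  qed
  show ?thesis
  proof (cases "q = 0")
    case True
    then have "\<forall>a :: nat \<Rightarrow> 'a. prodn a n = 0" using assms(5) sm0 by simp
    then show ?thesis using n1 by blast
  next
    case qn0: False
    show ?thesis
    proof (cases "\<forall>j<n. \<sigma> j = j")
      case True
      have "\<And>a :: nat \<Rightarrow> 'a. prodn a n = 0"
      proof -
        fix a :: "nat \<Rightarrow> 'a"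
        have eqa: "prodn (\<lambda>i. a (\<sigma> i)) n = prodn a n"
        proof -
          have "map (\<lambda>i. a (\<sigma> i)) [0..<n] = map a [0..<n]" using True by (intro map_cong) auto
          then show ?thesis unfolding prodn_lp[OF n1] by (rule arg_cong)
        qed
        have "prodn a n = smult q (prodn (\<lambda>i. a (\<sigma> i)) n)" using assms(5) by blast
        also have "\<dots> = smult q (prodn a n)" using eqa by (simp only:)
        finally have "prodn a n = smult q (prodn a n)" .
        then show "prodn a n = 0" by (rule fixz)
      qed
      then show ?thesis using n1 by blast
    next
      case False
      define \<tau> where "\<tau> = inv \<sigma>"
      have tperm: "\<tau> permutes {..<n}" unfolding \<tau>_def using assms(3) by (rule permutes_inv)
      have st: "\<And>j. \<sigma> (\<tau> j) = j" "\<And>j. \<tau> (\<sigma> j) = j"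
        unfolding \<tau>_def using assms(3) by (simp_all add: permutes_inverses)
      have "\<exists>i. 1 \<le> i \<and> i < n \<and> \<tau> i \<noteq> Suc (\<tau> (i - 1))"
      proof (rule ccontr)
        assume "\<not> ?thesis"
        then have h: "\<And>i. 1 \<le> i \<Longrightarrow> i < n \<Longrightarrow> \<tau> i = Suc (\<tau> (i - 1))" by blast
        have lin: "\<And>j. j < n \<Longrightarrow> \<tau> j = \<tau> 0 + j"
        proof -
          fix j :: nat
          show "j < n \<Longrightarrow> \<tau> j = \<tau> 0 + j"
          proof (induction j)
            case 0 show ?case by simp
          next
            case (Suc j)
            have "\<tau> (Suc j) = Suc (\<tau> j)" using h[of "Suc j"] Suc.prems by simp
            then show ?case using Suc by simp
          qed
        qed
        have "\<tau> (n - 1) \<in> {..<n}" using permutes_in_image[OF tperm, of "n - 1"] n1 by simp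
        then have t0: "\<tau> 0 = 0" using lin[of "n - 1"] n1 by simp
        have "\<sigma> j = j" if "j < n" for j
        proof -
          have "\<tau> j = j" using lin[OF that] t0 by simp
          then show ?thesis using st(1)[of j] by simp
        qed
        then show False using False by blast
      qed
      then obtain i where i: "1 \<le> i" "i < n" "\<tau> i \<noteq> Suc (\<tau> (i - 1))" by blast
      define s where "s = \<tau> i"
      define s' where "s' = Suc (\<tau> (i - 1))"
      have ti1: "\<tau> i < n" using permutes_in_image[OF tperm, of i] i by simp
      have ti2: "\<tau> (i - 1) < n" using permutes_in_image[OF tperm, of "i - 1"] i by simp
      have ss: "s \<noteq> s'" "s < n" "s' \<le> n"
        using i(3) ti1 ti2 unfolding s_def s'_def by simp_all
      have E1: "\<And>(ys :: 'a list) c x0 y0. length ys = n \<Longrightarrow>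
          foldl (*) x0 (take s ys @ c # drop s ys) * y0 = foldl (*) x0 (take s' ys @ c # drop s' ys) * y0"
      proof -
        fix ys :: "'a list" and c x0 y0 assume len: "length ys = n"
        define xs where "xs = permute_list \<tau> ys"
        have lx: "length xs = n" using len xs_def by simp
        have tp: "\<tau> permutes {..<length ys}" using tperm len by simp
        have sp: "\<sigma> permutes {..<length ys}" using assms(3) len by simp
        have pys: "permute_list \<sigma> xs = ys"
          unfolding xs_def permute_list_compose[OF sp, symmetric]
          using st(2) by (simp add: comp_def)
        have xsi: "\<And>j. j < n \<Longrightarrow> xs ! j = ys ! \<tau> j"
          unfolding xs_def using tp len by (simp add: permute_list_nth)
        define xs1 where "xs1 = xs[i := c * xs ! i]"
        define xs2 where "xs2 = xs[i - 1 := xs ! (i - 1) * c]"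
        have "foldl (*) x0 xs1 * y0 = foldl (*) x0 (take i xs @ c # drop i xs) * y0"
          unfolding xs1_def using i lx
          by (simp add: upd_conv_take_nth_drop Cons_nth_drop_Suc[symmetric] mult.assoc)
        also have "\<dots> = foldl (*) x0 xs2 * y0"
        proof -
          have t: "take i xs = take (i - 1) xs @ [xs ! (i - 1)]"
            using i lx take_Suc_conv_app_nth[of "i - 1" xs] by simp
          have d: "drop (i - 1) xs = xs ! (i - 1) # drop i xs"
            using i lx Cons_nth_drop_Suc[of "i - 1" xs] by simp
          show ?thesis unfolding xs2_def using i lx t d
            by (simp add: upd_conv_take_nth_drop mult.assoc)
        qed
        finally have eq: "foldl (*) x0 xs1 * y0 = foldl (*) x0 xs2 * y0" .
        have lx1: "length xs1 = n" "length xs2 = n" using lx xs1_def xs2_def by simp_all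
        have sp': "\<sigma> permutes {..<length xs}" using assms(3) lx by simp
        have "permute_list \<sigma> xs1 = (permute_list \<sigma> xs)[inv \<sigma> i := c * xs ! i]"
          unfolding xs1_def using perm_upd[OF sp', of i] lx i by simp
        also have "\<dots> = ys[s := c * ys ! s]" unfolding pys s_def \<tau>_def[symmetric] xsi[OF i(2)] ..
        finally have p1: "permute_list \<sigma> xs1 = ys[s := c * ys ! s]" .
        have "permute_list \<sigma> xs2 = (permute_list \<sigma> xs)[inv \<sigma> (i - 1) := xs ! (i - 1) * c]"
          unfolding xs2_def using perm_upd[OF sp', of "i - 1"] lx i by simp
        also have "\<dots> = ys[\<tau> (i - 1) := ys ! \<tau> (i - 1) * c]"
          unfolding pys \<tau>_def[symmetric] using xsi[of "i - 1"] i by simp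
        finally have p2: "permute_list \<sigma> xs2 = ys[\<tau> (i - 1) := ys ! \<tau> (i - 1) * c]" .
        have h1: "foldl (*) x0 (ys[s := c * ys ! s]) * y0 = foldl (*) x0 (ys[\<tau> (i - 1) := ys ! \<tau> (i - 1) * c]) * y0"
        proof -
          have "smult q (foldl (*) x0 (permute_list \<sigma> xs1) * y0) = foldl (*) x0 xs1 * y0"
            by (rule Hpad[OF lx1(1), symmetric])
          also note eq
          also have "foldl (*) x0 xs2 * y0 = smult q (foldl (*) x0 (permute_list \<sigma> xs2) * y0)"
            by (rule Hpad[OF lx1(2)])
          finally have "foldl (*) x0 (permute_list \<sigma> xs1) * y0 = foldl (*) x0 (permute_list \<sigma> xs2) * y0"
            by (rule canc[OF qn0])
          then show ?thesis unfolding p1 p2 .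
        qed
        have h2: "foldl (*) x0 (ys[s := c * ys ! s]) * y0 = foldl (*) x0 (take s ys @ c # drop s ys) * y0"
          using ss len by (simp add: upd_conv_take_nth_drop Cons_nth_drop_Suc[symmetric] mult.assoc)
        have h3: "foldl (*) x0 (ys[\<tau> (i - 1) := ys ! \<tau> (i - 1) * c]) * y0 = foldl (*) x0 (take s' ys @ c # drop s' ys) * y0"
        proof -
          have r: "\<tau> (i - 1) < length ys" using ti2 len by simp
          then show ?thesis unfolding s'_def
            by (simp add: upd_conv_take_nth_drop take_Suc_conv_app_nth mult.assoc)
        qed
        show "foldl (*) x0 (take s ys @ c # drop s ys) * y0 = foldl (*) x0 (take s' ys @ c # drop s' ys) * y0"
          by (rule trans[OF trans[OF h2[symmetric] h1] h3])
      qed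
      define u where "u = min s s'"
      define v where "v = max s s'"
      have uv: "u < v" "v \<le> n" using ss unfolding u_def v_def by auto
      have E1': "\<And>(ys :: 'a list) c x0 y0. length ys = n \<Longrightarrow>
          foldl (*) x0 (take u ys @ c # drop u ys) * y0 = foldl (*) x0 (take v ys @ c # drop v ys) * y0"
      proof -
        fix ys :: "'a list" and c x0 y0 assume len: "length ys = n"
        show "foldl (*) x0 (take u ys @ c # drop u ys) * y0 = foldl (*) x0 (take v ys @ c # drop v ys) * y0"
        proof (cases "s < s'")
          case True
          then have "u = s" "v = s'" unfolding u_def v_def by auto
          then show ?thesis using E1[OF len] by simp
        next
          case False
          then have "u = s'" "v = s" unfolding u_def v_def by auto
          then show ?thesis using E1[OF len] by simp
        qed
      qed
      define L where "L = v - u"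
      have L: "1 \<le> L" "L \<le> n" using uv unfolding L_def by auto
      have E2: "\<And>(U :: 'a list) Bs V c x0 y0. length U = u \<Longrightarrow> length Bs = L \<Longrightarrow> length V = n - v \<Longrightarrow>
          foldl (*) x0 (U @ c # Bs @ V) * y0 = foldl (*) x0 (U @ Bs @ c # V) * y0"
      proof -
        fix U Bs V :: "'a list" and c x0 y0
        assume l: "length U = u" "length Bs = L" "length V = n - v"
        have "length (U @ Bs @ V) = n" using l uv unfolding L_def by simp
        from E1'[OF this, of x0 c y0] show "foldl (*) x0 (U @ c # Bs @ V) * y0 = foldl (*) x0 (U @ Bs @ c # V) * y0"
          using l uv unfolding L_def by simp
      qed
      have E3: "\<And>x c B y :: 'a. x \<in> Pr (Suc u) \<Longrightarrow> B \<in> Pr L \<Longrightarrow> y \<in> Pr (Suc (n - v)) \<Longrightarrow> x*c*B*y = x*B*c*y"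
      proof -
        fix x c B y :: 'a assume h: "x \<in> Pr (Suc u)" "B \<in> Pr L" "y \<in> Pr (Suc (n - v))"
        obtain x0 U where x: "x = foldl (*) x0 U" "length U = u" using h(1) unfolding Pr_def by auto
        obtain b0 bs where B: "B = foldl (*) b0 bs" "Suc (length bs) = L" using h(2) unfolding Pr_def by auto
        obtain V y0 where y: "length V = n - v" "y = foldr (*) V y0" using Pr_foldr_char[OF h(3)] by blast
        have "foldl (*) x0 (U @ c # (b0 # bs) @ V) * y0 = foldl (*) x0 (U @ (b0 # bs) @ c # V) * y0"
          using E2[of U "b0 # bs" V] x B y by simp
        moreover have "foldl (*) x0 (U @ c # (b0 # bs) @ V) * y0 = x*c*B*y"
          using x B y by (simp add: foldl_mult_right mult_foldl mult.assoc)
        moreover have "foldl (*) x0 (U @ (b0 # bs) @ c # V) * y0 = x*B*c*y"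
          using x B y by (simp add: foldl_mult_right mult_foldl mult.assoc)
        ultimately show "x*c*B*y = x*B*c*y" by simp
      qed
      have E4: "\<And>x c B y :: 'a. x \<in> Pr n \<Longrightarrow> B \<in> Pr L \<Longrightarrow> y \<in> Pr n \<Longrightarrow> x*c*B*y = x*B*c*y"
      proof -
        fix x c B y :: 'a assume h: "x \<in> Pr n" "B \<in> Pr L" "y \<in> Pr n"
        have "x \<in> Pr (Suc u)" using Pr_mono[OF h(1)] uv by simp
        moreover have "y \<in> Pr (Suc (n - v))" using Pr_mono[OF h(3)] uv by simp
        ultimately show "x*c*B*y = x*B*c*y" using E3 h(2) by blast
      qed
      have S: "\<And>x y a b :: 'a. x \<in> Pr n \<Longrightarrow> y \<in> Pr (2*n) \<Longrightarrow> x*a*b*y = x*b*a*y"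
        using swap_from_E[OF E4 L] by blast
      have Sym: "\<And>x y xs ys. x \<in> Pr n \<Longrightarrow> y \<in> Pr (2*n) \<Longrightarrow> mset xs = mset ys \<Longrightarrow>
          foldl (*) x xs * (y::'a) = foldl (*) x ys * y"
        using sym_from_swap[OF S n1] by blast
      have "\<And>a :: nat \<Rightarrow> 'a. prodn a (4*n) = 0"
      proof -
        fix a :: "nat \<Rightarrow> 'a"
        define X where "X = map a [0..<n]"
        define M where "M = map a [n..<2*n]"
        define Y where "Y = map a [2*n..<4*n]"
        have u1: "[0..<4*n] = [0..<n] @ [n..<4*n]" using upt_add_eq_append[of 0 n "3*n"] by simp
        have u2: "[n..<4*n] = [n..<2*n] @ [2*n..<4*n]" using upt_add_eq_append[of n "2*n" "2*n"] by simp
        have "[0..<4*n] = [0..<n] @ [n..<2*n] @ [2*n..<4*n]" using u1 u2 by simp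
        then have split: "map a [0..<4*n] = X @ M @ Y" unfolding X_def M_def Y_def by simp
        have lens: "length X = n" "length M = n" "length Y = 2*n" unfolding X_def M_def Y_def by simp_all
        have nes: "X \<noteq> []" "Y \<noteq> []" using lens n1 by auto
        have xP: "lp X \<in> Pr n" using lp_Pr[OF lens(1) n1] .
        have yP: "lp Y \<in> Pr (2*n)" using lp_Pr[OF lens(3)] n1 by simp
        have w: "prodn a (4*n) = foldl (*) (lp X) M * lp Y"
        proof -
          have "prodn a (4*n) = lp (map a [0..<4*n])" using n1 by (intro prodn_lp) simp
          also have "\<dots> = lp (X @ M @ Y)" unfolding split ..
          also have "\<dots> = foldl (*) (lp X) (M @ Y)" using nes(1) by (rule lp_append)
          also have "\<dots> = foldl (*) (foldl (*) (lp X) M) Y" by simp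
          also have "\<dots> = foldl (*) (lp X) M * lp Y" using nes(2) by (rule lp_foldl)
          finally show ?thesis .
        qed
        have sy: "foldl (*) (lp X) (permute_list \<sigma> M) * lp Y = foldl (*) (lp X) M * lp Y"
        proof (rule Sym[OF xP yP])
          have "\<sigma> permutes {..<length M}" using assms(3) lens(2) by simp
          then show "mset (permute_list \<sigma> M) = mset M" by (rule mset_permute_list)
        qed
        have "prodn a (4*n) = foldl (*) (lp X) M * lp Y" by (rule w)
        also have "\<dots> = smult q (foldl (*) (lp X) (permute_list \<sigma> M) * lp Y)"
          by (rule Hpad[OF lens(2)])
        also have "\<dots> = smult q (foldl (*) (lp X) M * lp Y)" unfolding sy ..
        also have "\<dots> = smult q (prodn a (4*n))" unfolding w ..
        finally have "prodn a (4*n) = smult q (prodn a (4*n))" .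
        then show "prodn a (4*n) = 0" by (rule fixz)
      qed
      then show ?thesis using n1 by (intro exI[of _ "4*n"]) simp
    qed
  qed
qed

end
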